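(* Let $G=(V,E)$ be a finite simple graph which is $S_{1,1,5}$-free. Let $xy\in E$ and for $i\ge 1$ let $N_i=\{z\in V:\operatorname{dist}_G(z,\{x,y\})=i\}$. Assume $N_2=\{u_1,\dots,u_k\}$ is an independent set, and for each $i$ let $T_i$ be the set of vertices $t\in N_3$ whose only neighbor in $N_2$ is $u_i$. Then there is no induced path $(t_1,t_2,t_3,t_4,t_5)$ in $G[N_3]$ with $t_j\in T_{i_j}$ for five pairwise distinct indices $i_1,\dots,i_5$.
   Context: $S_{1,1,5}$ is the tree with a center $u$ adjacent to $a$, $b$ and $z_1$, where $u,z_1,\dots,z_5$ is an induced path, and no other edges. $\operatorname{dist}_G(z,\{x,y\})$ is the minimum of the distances from $z$ to $x$ and to $y$. *)

theory Defs
  imports Main "HOL-Library.Extended_Nat"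
begin

definition simple_graph :: "'a set \<Rightarrow> ('a \<Rightarrow> 'a \<Rightarrow> bool) \<Rightarrow> bool" where
  "simple_graph V E \<longleftrightarrow> finite V \<and> (\<forall>a b. E a b \<longrightarrow> E b a) \<and> (\<forall>a. \<not> E a a)
     \<and> (\<forall>a b. E a b \<longrightarrow> a \<in> V \<and> b \<in> V)"

definition walk :: "'a set \<Rightarrow> ('a \<Rightarrow> 'a \<Rightarrow> bool) \<Rightarrow> 'a list \<Rightarrow> bool" where
  "walk V E xs \<longleftrightarrow> xs \<noteq> [] \<and> set xs \<subseteq> V \<and> (\<forall>i. Suc i < length xs \<longrightarrow> E (xs ! i) (xs ! Suc i))"

definition gdist :: "'a set \<Rightarrow> ('a \<Rightarrow> 'a \<Rightarrow> bool) \<Rightarrow> 'a \<Rightarrow> 'a \<Rightarrow> enat" where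
  "gdist V E a b = (INF xs \<in> {xs. walk V E xs \<and> hd xs = a \<and> last xs = b}. enat (length xs - 1))"

definition dist_set2 :: "'a set \<Rightarrow> ('a \<Rightarrow> 'a \<Rightarrow> bool) \<Rightarrow> 'a \<Rightarrow> 'a \<Rightarrow> 'a \<Rightarrow> enat" where
  "dist_set2 V E z x y = min (gdist V E z x) (gdist V E z y)"

definition layer :: "'a set \<Rightarrow> ('a \<Rightarrow> 'a \<Rightarrow> bool) \<Rightarrow> 'a \<Rightarrow> 'a \<Rightarrow> nat \<Rightarrow> 'a set" where
  "layer V E x y i = {z \<in> V. dist_set2 V E z x y = enat i}"

definition independent_set :: "('a \<Rightarrow> 'a \<Rightarrow> bool) \<Rightarrow> 'a set \<Rightarrow> bool" where
  "independent_set E S \<longleftrightarrow> (\<forall>a\<in>S. \<forall>b\<in>S. \<not> E a b)"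

text \<open>S_{1,1,5}: centre u adjacent to a, b, z1; u,z1,...,z5 an induced path; no other edges.\<close>
definition S115_edges :: "(nat \<times> nat) set" where
  "S115_edges = {(0,1),(0,2),(0,3),(3,4),(4,5),(5,6),(6,7)}"

definition S115_free :: "'a set \<Rightarrow> ('a \<Rightarrow> 'a \<Rightarrow> bool) \<Rightarrow> bool" where
  "S115_free V E \<longleftrightarrow> \<not> (\<exists>f :: nat \<Rightarrow> 'a. inj_on f {0..<8} \<and> f ` {0..<8} \<subseteq> V \<and>
     (\<forall>i<8. \<forall>j<8. E (f i) (f j) \<longleftrightarrow> ((i,j) \<in> S115_edges \<or> (j,i) \<in> S115_edges)))"

definition induced_path :: "('a \<Rightarrow> 'a \<Rightarrow> bool) \<Rightarrow> 'a list \<Rightarrow> bool" where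
  "induced_path E ts \<longleftrightarrow> distinct ts \<and>
     (\<forall>i<length ts. \<forall>j<length ts. E (ts ! i) (ts ! j) \<longleftrightarrow> (i = Suc j \<or> j = Suc i))"

end

theory Submission
  imports Defs
begin


lemma gdist_le:
  assumes "walk V E ws" "hd ws = a" "last ws = b"
  shows "gdist V E a b \<le> enat (length ws - 1)"
  unfolding gdist_def using assms by (intro INF_lower) auto

lemma gdist_obtain:
  assumes "gdist V E a b = enat n"
  obtains ws where "walk V E ws" "hd ws = a" "last ws = b" "length ws = Suc n"
proof -
  let ?S = "{xs. walk V E xs \<and> hd xs = a \<and> last xs = b}"
  let ?f = "\<lambda>xs. enat (length xs - 1)"
  have ne: "?f ` ?S \<noteq> {}"
  proof
    assume "?f ` ?S = {}"
    then have "gdist V E a b = Inf {}" unfolding gdist_def by metis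
    then have "gdist V E a b = \<infinity>" by (simp add: top_enat_def)
    with assms show False by simp
  qed
  obtain z0 where "z0 \<in> ?f ` ?S" using ne by blast
  then have L: "(LEAST z. z \<in> ?f ` ?S) \<in> ?f ` ?S" by (rule LeastI)
  have "Inf (?f ` ?S) = (LEAST z. z \<in> ?f ` ?S)" unfolding Inf_enat_def using ne by (rule if_not_P)
  with L have "Inf (?f ` ?S) \<in> ?f ` ?S" by simp
  then obtain ws where ws: "ws \<in> ?S" "?f ws = enat n" using assms unfolding gdist_def by auto
  then have "ws \<noteq> []" unfolding walk_def by auto
  with ws show ?thesis using that by auto
qed

lemma gdist_step:
  assumes G: "simple_graph V E" and e: "E a c"
  shows "gdist V E a b \<le> gdist V E c b + 1"
proof (cases "gdist V E c b")
  case (enat n)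
  then obtain ws where ws: "walk V E ws" "hd ws = c" "last ws = b" "length ws = Suc n"
    by (rule gdist_obtain)
  have aV: "a \<in> V" using G e unfolding simple_graph_def by auto
  have ne: "ws \<noteq> []" using ws by auto
  have "walk V E (a # ws)"
    unfolding walk_def
  proof (intro conjI allI impI)
    show "set (a # ws) \<subseteq> V" using ws(1) aV unfolding walk_def by auto
    fix i assume i: "Suc i < length (a # ws)"
    show "E ((a # ws) ! i) ((a # ws) ! Suc i)"
    proof (cases i)
      case 0 then show ?thesis using e ws(2) ne by (simp add: hd_conv_nth)
    next
      case (Suc j) then show ?thesis using ws(1) i unfolding walk_def by auto
    qed
  qed simp
  then have "gdist V E a b \<le> enat (length (a # ws) - 1)"
    by (rule gdist_le) (use ws ne in auto)
  then show ?thesis using enat ws by (simp add: one_enat_def)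
qed simp

lemma dist_step:
  assumes G: "simple_graph V E" and e: "E a c"
  shows "dist_set2 V E a x y \<le> dist_set2 V E c x y + 1"
proof -
  have 1: "gdist V E a x \<le> gdist V E c x + 1" and 2: "gdist V E a y \<le> gdist V E c y + 1"
    using gdist_step[OF G e] by auto
  show ?thesis unfolding dist_set2_def using 1 2
    by (cases "gdist V E c x \<le> gdist V E c y") (auto simp: min_def intro: order_trans add_right_mono)
qed

lemma layer_adj:
  assumes G: "simple_graph V E" and e: "E a b"
    and a: "a \<in> layer V E x y i" and b: "b \<in> layer V E x y j"
  shows "i \<le> Suc j"
proof -
  have "dist_set2 V E a x y \<le> dist_set2 V E b x y + 1" by (rule dist_step[OF G e])
  with a b show ?thesis unfolding layer_def by (simp add: one_enat_def)
qed

lemma layer_down: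
  assumes G: "simple_graph V E" and z: "z \<in> layer V E x y i" and i: "i \<ge> 1"
  shows "\<exists>z'. E z z' \<and> z' \<in> layer V E x y (i - 1)"
proof -
  have dz: "dist_set2 V E z x y = enat i" using z unfolding layer_def by auto
  obtain v where v: "gdist V E z v = enat i" "v = x \<or> v = y"
    using dz unfolding dist_set2_def by (metis min_def)
  obtain ws where ws: "walk V E ws" "hd ws = z" "last ws = v" "length ws = Suc i"
    using v(1) by (rule gdist_obtain)
  then obtain z' rest where wsc: "ws = z # z' # rest" using i
    by (cases ws; cases "tl ws") auto
  have ez: "E z z'" using ws(1) wsc unfolding walk_def by force
  have z'V: "z' \<in> V" using ws(1) wsc unfolding walk_def by auto
  have w': "walk V E (z' # rest)" using ws(1) wsc unfolding walk_def by force
  have "gdist V E z' v \<le> enat (length (z' # rest) - 1)"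
    by (rule gdist_le[OF w']) (use ws wsc in auto)
  moreover have "length (z' # rest) - 1 = i - 1" using ws wsc by simp
  ultimately have g': "gdist V E z' v \<le> enat (i - 1)" by simp
  have "dist_set2 V E z' x y \<le> gdist V E z' v" using v(2) unfolding dist_set2_def by auto
  with g' have le: "dist_set2 V E z' x y \<le> enat (i - 1)" using order_trans by blast
  have ge: "enat i \<le> dist_set2 V E z' x y + 1" using dist_step[OF G ez, of x y] dz by simp
  from le obtain m where m: "dist_set2 V E z' x y = enat m" "m \<le> i - 1"
    by (cases "dist_set2 V E z' x y") auto
  with ge have "m = i - 1" by (simp add: one_enat_def)
  with m ez z'V show ?thesis unfolding layer_def by auto
qed


lemma less8: "i < (8::nat) \<Longrightarrow> i = 0 \<or> i = 1 \<or> i = 2 \<or> i = 3 \<or> i = 4 \<or> i = 5 \<or> i = 6 \<or> i = 7"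
  by arith

lemma all8: "(\<forall>i<(8::nat). P i) \<longleftrightarrow> P 0 \<and> P 1 \<and> P 2 \<and> P 3 \<and> P 4 \<and> P 5 \<and> P 6 \<and> P 7"
proof
  assume "\<forall>i<(8::nat). P i" then show "P 0 \<and> P 1 \<and> P 2 \<and> P 3 \<and> P 4 \<and> P 5 \<and> P 6 \<and> P 7" by simp
next
  assume "P 0 \<and> P 1 \<and> P 2 \<and> P 3 \<and> P 4 \<and> P 5 \<and> P 6 \<and> P 7"
  then show "\<forall>i<(8::nat). P i" using less8 by metis
qed

lemma S115_witness:
  assumes G: "simple_graph V E"
    and V: "c \<in> V" "a \<in> V" "b \<in> V" "z1 \<in> V" "z2 \<in> V" "z3 \<in> V" "z4 \<in> V" "z5 \<in> V"
    and D: "distinct [c,a,b,z1,z2,z3,z4,z5]"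
    and e: "E c a" "E c b" "E c z1" "E z1 z2" "E z2 z3" "E z3 z4" "E z4 z5"
    and n1: "\<not> E a b" "\<not> E a z1" "\<not> E a z2" "\<not> E a z3" "\<not> E a z4" "\<not> E a z5"
    and n2: "\<not> E b z1" "\<not> E b z2" "\<not> E b z3" "\<not> E b z4" "\<not> E b z5"
    and n3: "\<not> E c z2" "\<not> E c z3" "\<not> E c z4" "\<not> E c z5"
    and n4: "\<not> E z1 z3" "\<not> E z1 z4" "\<not> E z1 z5" "\<not> E z2 z4" "\<not> E z2 z5" "\<not> E z3 z5"
  shows "\<not> S115_free V E"
proof -
  have sym: "\<And>p q. E p q \<Longrightarrow> E q p" and irr: "\<And>p. \<not> E p p"
    using G unfolding simple_graph_def by auto
  have sym': "\<And>p q. \<not> E p q \<Longrightarrow> \<not> E q p" using sym by blast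
  define f where "f = (!) [c,a,b,z1,z2,z3,z4,z5]"
  have inj: "inj_on f {0..<8}" unfolding f_def using D
    by (intro inj_on_nth D) simp
  have "f ` {0..<8} \<subseteq> set [c,a,b,z1,z2,z3,z4,z5]" unfolding f_def
    by (rule image_subsetI, rule nth_mem) simp
  also have "\<dots> \<subseteq> V" using V by simp
  finally have img: "f ` {0..<8} \<subseteq> V" .
  have fv: "f 0 = c" "f 1 = a" "f 2 = b" "f 3 = z1" "f 4 = z2" "f 5 = z3" "f 6 = z4" "f 7 = z5"
    unfolding f_def by (simp_all add: numeral_eq_Suc)
  have "\<forall>i<8. \<forall>j<8. E (f i) (f j) \<longleftrightarrow> ((i,j) \<in> S115_edges \<or> (j,i) \<in> S115_edges)"
    unfolding all8 fv S115_edges_def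
    using e n1 n2 n3 n4 e[THEN sym] n1[THEN sym'] n2[THEN sym'] n3[THEN sym'] n4[THEN sym'] irr by simp
  then show ?thesis unfolding S115_free_def using inj img by blast
qed

theorem lemma12:
  fixes V :: "'a set" and E :: "'a \<Rightarrow> 'a \<Rightarrow> bool" and x y :: 'a
    and k :: nat and u :: "nat \<Rightarrow> 'a" and T :: "nat \<Rightarrow> 'a set"
  assumes G: "simple_graph V E"
    and free: "S115_free V E"
    and xy: "E x y"
    and N2: "bij_betw u {1..k} (layer V E x y 2)"
    and indep: "independent_set E (layer V E x y 2)"
    and T_def: "\<And>i. T i = {t \<in> layer V E x y 3. {w \<in> layer V E x y 2. E t w} = {u i}}"
  shows "\<not> (\<exists>ts :: 'a list. \<exists>idx :: nat \<Rightarrow> nat.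
            length ts = 5 \<and> set ts \<subseteq> layer V E x y 3 \<and> induced_path E ts \<and>
            inj_on idx {0..<5} \<and> (\<forall>j<5. idx j \<in> {1..k} \<and> ts ! j \<in> T (idx j)))"
proof
  assume "\<exists>ts :: 'a list. \<exists>idx :: nat \<Rightarrow> nat.
            length ts = 5 \<and> set ts \<subseteq> layer V E x y 3 \<and> induced_path E ts \<and>
            inj_on idx {0..<5} \<and> (\<forall>j<5. idx j \<in> {1..k} \<and> ts ! j \<in> T (idx j))"
  then obtain ts idx where len: "length ts = 5" and sub: "set ts \<subseteq> layer V E x y 3"
    and ip: "induced_path E ts" and injI: "inj_on idx {0..<5}"
    and idxP: "\<And>j. j < 5 \<Longrightarrow> idx j \<in> {1..k} \<and> ts ! j \<in> T (idx j)" by blast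
  let ?L = "layer V E x y"
  have sym: "\<And>p q. E p q \<Longrightarrow> E q p" and inV: "\<And>p q. E p q \<Longrightarrow> p \<in> V"
    using G unfolding simple_graph_def by auto
  have Vl: "\<And>p i. p \<in> ?L i \<Longrightarrow> p \<in> V" unfolding layer_def by auto
  have nE: "\<And>p q i j. p \<in> ?L i \<Longrightarrow> q \<in> ?L j \<Longrightarrow> Suc (Suc j) \<le> i \<or> Suc (Suc i) \<le> j \<Longrightarrow> \<not> E p q"
  proof
    fix p q i j assume p: "p \<in> ?L i" and q: "q \<in> ?L j" and ij: "Suc (Suc j) \<le> i \<or> Suc (Suc i) \<le> j"
      and e: "E p q"
    have "i \<le> Suc j" by (rule layer_adj[OF G e p q])
    moreover have "j \<le> Suc i" by (rule layer_adj[OF G sym[OF e] q p])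
    ultimately show False using ij by simp
  qed
  have nq: "\<And>p q i j. p \<in> ?L i \<Longrightarrow> q \<in> ?L j \<Longrightarrow> i \<noteq> j \<Longrightarrow> p \<noteq> q"
    unfolding layer_def by auto
  have uinj: "inj_on u {1..k}" using N2 by (rule bij_betw_imp_inj_on)
  have uL: "\<And>i. i \<in> {1..k} \<Longrightarrow> u i \<in> ?L 2" using N2 by (auto simp: bij_betw_def)
  have tL: "\<And>j. j < 5 \<Longrightarrow> ts ! j \<in> ?L 3" using sub len by (auto intro: nth_mem)
  have tU: "\<And>j. j < 5 \<Longrightarrow> {w \<in> ?L 2. E (ts ! j) w} = {u (idx j)}"
    using idxP T_def by auto
  have tUE: "\<And>j. j < 5 \<Longrightarrow> E (ts ! j) (u (idx j))"
    using tU by blast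
  have tUo: "\<And>j w. j < 5 \<Longrightarrow> w \<in> ?L 2 \<Longrightarrow> E (ts ! j) w \<Longrightarrow> w = u (idx j)"
    using tU by blast
  have Ud: "\<And>j l. j < 5 \<Longrightarrow> l < 5 \<Longrightarrow> j \<noteq> l \<Longrightarrow> u (idx j) \<noteq> u (idx l)"
  proof
    fix j l assume j: "j < 5" and l: "l < 5" and jl: "j \<noteq> l" and eq: "u (idx j) = u (idx l)"
    have "idx j = idx l" using inj_onD[OF uinj eq] idxP j l by auto
    then have "j = l" using inj_onD[OF injI] j l by auto
    with jl show False by simp
  qed
  have UL: "\<And>j. j < 5 \<Longrightarrow> u (idx j) \<in> ?L 2" using idxP uL by auto
  have tnU: "\<And>j l. j < 5 \<Longrightarrow> l < 5 \<Longrightarrow> j \<noteq> l \<Longrightarrow> \<not> E (ts ! j) (u (idx l))"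
    using tUo UL Ud by metis
  have UU: "\<And>j l. j < 5 \<Longrightarrow> l < 5 \<Longrightarrow> \<not> E (u (idx j)) (u (idx l))"
    using indep UL unfolding independent_set_def by blast
  have dts: "distinct ts" and tt: "\<And>i j. i < 5 \<Longrightarrow> j < 5 \<Longrightarrow> E (ts ! i) (ts ! j) \<longleftrightarrow> (i = Suc j \<or> j = Suc i)"
    using ip len unfolding induced_path_def by auto
  define a0 where "a0 = ts ! 0"
  define a1 where "a1 = ts ! 1"
  define a2 where "a2 = ts ! 2"
  define a3 where "a3 = ts ! 3"
  define a4 where "a4 = ts ! 4"
  define b0 where "b0 = u (idx 0)"
  define b2 where "b2 = u (idx 2)"
  define b4 where "b4 = u (idx 4)"
  have Lf: "a0 \<in> ?L 3" "a1 \<in> ?L 3" "a2 \<in> ?L 3" "a3 \<in> ?L 3" "a4 \<in> ?L 3"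
    "b0 \<in> ?L 2" "b2 \<in> ?L 2" "b4 \<in> ?L 2"
    unfolding a0_def a1_def a2_def a3_def a4_def b0_def b2_def b4_def using tL UL by auto
  obtain w where w: "E b0 w" "w \<in> ?L 1" using layer_down[OF G Lf(6)] by auto
  obtain xx where xx: "E w xx" "xx \<in> ?L 0" using layer_down[OF G w(2)] by auto
  have ab: "E a0 b0" "E a2 b2" "E a4 b4" "\<not> E a1 b0" "\<not> E a2 b0" "\<not> E a3 b0" "\<not> E a4 b0"
    "\<not> E a0 b2" "\<not> E a1 b2" "\<not> E a3 b2" "\<not> E a4 b2"
    "\<not> E a0 b4" "\<not> E a1 b4" "\<not> E a2 b4" "\<not> E a3 b4"
    unfolding a0_def a1_def a2_def a3_def a4_def b0_def b2_def b4_def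
    using tUE tnU by auto
  have bb: "b0 \<noteq> b2" "b0 \<noteq> b4" "b2 \<noteq> b4" "\<not> E b0 b2" "\<not> E b0 b4" "\<not> E b2 b4"
    unfolding b0_def b2_def b4_def using Ud UU by auto
  have aa: "E a0 a1" "E a1 a2" "E a2 a3" "E a3 a4" "\<not> E a0 a2" "\<not> E a0 a3" "\<not> E a0 a4"
    "\<not> E a1 a3" "\<not> E a1 a4" "\<not> E a2 a4"
    unfolding a0_def a1_def a2_def a3_def a4_def using tt by auto
  have da: "distinct [a0, a1, a2, a3, a4]"
  proof -
    have ne: "\<And>i j. i < 5 \<Longrightarrow> j < 5 \<Longrightarrow> ts ! i = ts ! j \<longleftrightarrow> i = j"
      using dts len by (simp add: nth_eq_iff_index_eq)
    show ?thesis unfolding a0_def a1_def a2_def a3_def a4_def by (simp add: ne)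
  qed
  note NQ = TrueI
  note NE = TrueI
  have "a0 \<noteq> b0" by (rule nq[OF Lf(1) Lf(6)]) simp
  note NQ = NQ this
  have "a0 \<noteq> b2" by (rule nq[OF Lf(1) Lf(7)]) simp
  note NQ = NQ this
  have "a0 \<noteq> b4" by (rule nq[OF Lf(1) Lf(8)]) simp
  note NQ = NQ this
  have "a0 \<noteq> w" by (rule nq[OF Lf(1) w(2)]) simp
  note NQ = NQ this
  have "a0 \<noteq> xx" by (rule nq[OF Lf(1) xx(2)]) simp
  note NQ = NQ this
  have "a1 \<noteq> b0" by (rule nq[OF Lf(2) Lf(6)]) simp
  note NQ = NQ this
  have "a1 \<noteq> b2" by (rule nq[OF Lf(2) Lf(7)]) simp
  note NQ = NQ this
  have "a1 \<noteq> b4" by (rule nq[OF Lf(2) Lf(8)]) simp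
  note NQ = NQ this
  have "a1 \<noteq> w" by (rule nq[OF Lf(2) w(2)]) simp
  note NQ = NQ this
  have "a1 \<noteq> xx" by (rule nq[OF Lf(2) xx(2)]) simp
  note NQ = NQ this
  have "a2 \<noteq> b0" by (rule nq[OF Lf(3) Lf(6)]) simp
  note NQ = NQ this
  have "a2 \<noteq> b2" by (rule nq[OF Lf(3) Lf(7)]) simp
  note NQ = NQ this
  have "a2 \<noteq> b4" by (rule nq[OF Lf(3) Lf(8)]) simp
  note NQ = NQ this
  have "a2 \<noteq> w" by (rule nq[OF Lf(3) w(2)]) simp
  note NQ = NQ this
  have "a2 \<noteq> xx" by (rule nq[OF Lf(3) xx(2)]) simp
  note NQ = NQ this
  have "a3 \<noteq> b0" by (rule nq[OF Lf(4) Lf(6)]) simp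
  note NQ = NQ this
  have "a3 \<noteq> b2" by (rule nq[OF Lf(4) Lf(7)]) simp
  note NQ = NQ this
  have "a3 \<noteq> b4" by (rule nq[OF Lf(4) Lf(8)]) simp
  note NQ = NQ this
  have "a3 \<noteq> w" by (rule nq[OF Lf(4) w(2)]) simp
  note NQ = NQ this
  have "a3 \<noteq> xx" by (rule nq[OF Lf(4) xx(2)]) simp
  note NQ = NQ this
  have "a4 \<noteq> b0" by (rule nq[OF Lf(5) Lf(6)]) simp
  note NQ = NQ this
  have "a4 \<noteq> b2" by (rule nq[OF Lf(5) Lf(7)]) simp
  note NQ = NQ this
  have "a4 \<noteq> b4" by (rule nq[OF Lf(5) Lf(8)]) simp
  note NQ = NQ this
  have "a4 \<noteq> w" by (rule nq[OF Lf(5) w(2)]) simp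
  note NQ = NQ this
  have "a4 \<noteq> xx" by (rule nq[OF Lf(5) xx(2)]) simp
  note NQ = NQ this
  have "b0 \<noteq> a0" by (rule nq[OF Lf(6) Lf(1)]) simp
  note NQ = NQ this
  have "b0 \<noteq> a1" by (rule nq[OF Lf(6) Lf(2)]) simp
  note NQ = NQ this
  have "b0 \<noteq> a2" by (rule nq[OF Lf(6) Lf(3)]) simp
  note NQ = NQ this
  have "b0 \<noteq> a3" by (rule nq[OF Lf(6) Lf(4)]) simp
  note NQ = NQ this
  have "b0 \<noteq> a4" by (rule nq[OF Lf(6) Lf(5)]) simp
  note NQ = NQ this
  have "b0 \<noteq> w" by (rule nq[OF Lf(6) w(2)]) simp
  note NQ = NQ this
  have "b0 \<noteq> xx" by (rule nq[OF Lf(6) xx(2)]) simp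
  note NQ = NQ this
  have "b2 \<noteq> a0" by (rule nq[OF Lf(7) Lf(1)]) simp
  note NQ = NQ this
  have "b2 \<noteq> a1" by (rule nq[OF Lf(7) Lf(2)]) simp
  note NQ = NQ this
  have "b2 \<noteq> a2" by (rule nq[OF Lf(7) Lf(3)]) simp
  note NQ = NQ this
  have "b2 \<noteq> a3" by (rule nq[OF Lf(7) Lf(4)]) simp
  note NQ = NQ this
  have "b2 \<noteq> a4" by (rule nq[OF Lf(7) Lf(5)]) simp
  note NQ = NQ this
  have "b2 \<noteq> w" by (rule nq[OF Lf(7) w(2)]) simp
  note NQ = NQ this
  have "b2 \<noteq> xx" by (rule nq[OF Lf(7) xx(2)]) simp
  note NQ = NQ this
  have "b4 \<noteq> a0" by (rule nq[OF Lf(8) Lf(1)]) simp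
  note NQ = NQ this
  have "b4 \<noteq> a1" by (rule nq[OF Lf(8) Lf(2)]) simp
  note NQ = NQ this
  have "b4 \<noteq> a2" by (rule nq[OF Lf(8) Lf(3)]) simp
  note NQ = NQ this
  have "b4 \<noteq> a3" by (rule nq[OF Lf(8) Lf(4)]) simp
  note NQ = NQ this
  have "b4 \<noteq> a4" by (rule nq[OF Lf(8) Lf(5)]) simp
  note NQ = NQ this
  have "b4 \<noteq> w" by (rule nq[OF Lf(8) w(2)]) simp
  note NQ = NQ this
  have "b4 \<noteq> xx" by (rule nq[OF Lf(8) xx(2)]) simp
  note NQ = NQ this
  have "w \<noteq> a0" by (rule nq[OF w(2) Lf(1)]) simp
  note NQ = NQ this
  have "w \<noteq> a1" by (rule nq[OF w(2) Lf(2)]) simp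
  note NQ = NQ this
  have "w \<noteq> a2" by (rule nq[OF w(2) Lf(3)]) simp
  note NQ = NQ this
  have "w \<noteq> a3" by (rule nq[OF w(2) Lf(4)]) simp
  note NQ = NQ this
  have "w \<noteq> a4" by (rule nq[OF w(2) Lf(5)]) simp
  note NQ = NQ this
  have "w \<noteq> b0" by (rule nq[OF w(2) Lf(6)]) simp
  note NQ = NQ this
  have "w \<noteq> b2" by (rule nq[OF w(2) Lf(7)]) simp
  note NQ = NQ this
  have "w \<noteq> b4" by (rule nq[OF w(2) Lf(8)]) simp
  note NQ = NQ this
  have "w \<noteq> xx" by (rule nq[OF w(2) xx(2)]) simp
  note NQ = NQ this
  have "xx \<noteq> a0" by (rule nq[OF xx(2) Lf(1)]) simp
  note NQ = NQ this
  have "xx \<noteq> a1" by (rule nq[OF xx(2) Lf(2)]) simp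
  note NQ = NQ this
  have "xx \<noteq> a2" by (rule nq[OF xx(2) Lf(3)]) simp
  note NQ = NQ this
  have "xx \<noteq> a3" by (rule nq[OF xx(2) Lf(4)]) simp
  note NQ = NQ this
  have "xx \<noteq> a4" by (rule nq[OF xx(2) Lf(5)]) simp
  note NQ = NQ this
  have "xx \<noteq> b0" by (rule nq[OF xx(2) Lf(6)]) simp
  note NQ = NQ this
  have "xx \<noteq> b2" by (rule nq[OF xx(2) Lf(7)]) simp
  note NQ = NQ this
  have "xx \<noteq> b4" by (rule nq[OF xx(2) Lf(8)]) simp
  note NQ = NQ this
  have "xx \<noteq> w" by (rule nq[OF xx(2) w(2)]) simp
  note NQ = NQ this
  have "\<not> E a0 w" by (rule nE[OF Lf(1) w(2)]) simp
  note NE = NE this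
  have "\<not> E a0 xx" by (rule nE[OF Lf(1) xx(2)]) simp
  note NE = NE this
  have "\<not> E a1 w" by (rule nE[OF Lf(2) w(2)]) simp
  note NE = NE this
  have "\<not> E a1 xx" by (rule nE[OF Lf(2) xx(2)]) simp
  note NE = NE this
  have "\<not> E a2 w" by (rule nE[OF Lf(3) w(2)]) simp
  note NE = NE this
  have "\<not> E a2 xx" by (rule nE[OF Lf(3) xx(2)]) simp
  note NE = NE this
  have "\<not> E a3 w" by (rule nE[OF Lf(4) w(2)]) simp
  note NE = NE this
  have "\<not> E a3 xx" by (rule nE[OF Lf(4) xx(2)]) simp
  note NE = NE this
  have "\<not> E a4 w" by (rule nE[OF Lf(5) w(2)]) simp
  note NE = NE this
  have "\<not> E a4 xx" by (rule nE[OF Lf(5) xx(2)]) simp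
  note NE = NE this
  have "\<not> E b0 xx" by (rule nE[OF Lf(6) xx(2)]) simp
  note NE = NE this
  have "\<not> E b2 xx" by (rule nE[OF Lf(7) xx(2)]) simp
  note NE = NE this
  have "\<not> E b4 xx" by (rule nE[OF Lf(8) xx(2)]) simp
  note NE = NE this
  have "\<not> E w a0" by (rule nE[OF w(2) Lf(1)]) simp
  note NE = NE this
  have "\<not> E w a1" by (rule nE[OF w(2) Lf(2)]) simp
  note NE = NE this
  have "\<not> E w a2" by (rule nE[OF w(2) Lf(3)]) simp
  note NE = NE this
  have "\<not> E w a3" by (rule nE[OF w(2) Lf(4)]) simp
  note NE = NE this
  have "\<not> E w a4" by (rule nE[OF w(2) Lf(5)]) simp
  note NE = NE this
  have "\<not> E xx a0" by (rule nE[OF xx(2) Lf(1)]) simp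
  note NE = NE this
  have "\<not> E xx a1" by (rule nE[OF xx(2) Lf(2)]) simp
  note NE = NE this
  have "\<not> E xx a2" by (rule nE[OF xx(2) Lf(3)]) simp
  note NE = NE this
  have "\<not> E xx a3" by (rule nE[OF xx(2) Lf(4)]) simp
  note NE = NE this
  have "\<not> E xx a4" by (rule nE[OF xx(2) Lf(5)]) simp
  note NE = NE this
  have "\<not> E xx b0" by (rule nE[OF xx(2) Lf(6)]) simp
  note NE = NE this
  have "\<not> E xx b2" by (rule nE[OF xx(2) Lf(7)]) simp
  note NE = NE this
  have "\<not> E xx b4" by (rule nE[OF xx(2) Lf(8)]) simp
  note NE = NE this
  have AN: "a0 \<noteq> a1" "a0 \<noteq> a2" "a0 \<noteq> a3" "a0 \<noteq> a4" "a1 \<noteq> a0" "a1 \<noteq> a2" "a1 \<noteq> a3" "a1 \<noteq> a4" "a2 \<noteq> a0" "a2 \<noteq> a1" "a2 \<noteq> a3" "a2 \<noteq> a4" "a3 \<noteq> a0" "a3 \<noteq> a1" "a3 \<noteq> a2" "a3 \<noteq> a4" "a4 \<noteq> a0" "a4 \<noteq> a1" "a4 \<noteq> a2" "a4 \<noteq> a3"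
    using da by auto
  have VV: "a0 \<in> V" "a1 \<in> V" "a2 \<in> V" "a3 \<in> V" "a4 \<in> V" "b0 \<in> V" "b2 \<in> V" "b4 \<in> V" "w \<in> V" "xx \<in> V"
    using Lf w(2) xx(2) Vl by auto
  note F = VV NQ NE aa(1-4)[THEN sym] aa ab ab(1-3)[THEN sym] bb bb(1-3)[symmetric] AN w(1) xx(1) w(1)[THEN sym] xx(1)[THEN sym] da
  have sym': "\<And>p q. \<not> E p q \<Longrightarrow> \<not> E q p" using sym by blast
  note F' = F aa(5-10)[THEN sym'] ab(4-15)[THEN sym'] bb(4-6)[THEN sym'] 
  show False
  proof (cases "E w b2")
    case False
    have "\<not> S115_free V E"
      by (rule S115_witness[OF G, of a2 a3 b2 a1 a0 b0 w xx]) (simp_all add: F' False False[THEN sym'])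
    with free show False by simp
  next
    case True
    show False
    proof (cases "E w b4")
      case False
      have "\<not> S115_free V E"
        by (rule S115_witness[OF G, of w b0 xx b2 a2 a3 a4 b4]) (simp_all add: F' True False False[THEN sym'] True[THEN sym])
      with free show False by simp
    next
      case True2: True
      have "\<not> S115_free V E"
        by (rule S115_witness[OF G, of w xx b0 b4 a4 a3 a2 a1]) (simp_all add: F' True True2 True[THEN sym] True2[THEN sym])
      with free show False by simp
    qed
  qed
qed

end
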